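(* For $n\ge1$ let $R_n(t)=\sum_{T'\in\mathcal{T}'_n}t^{\operatorname{cdes}(T')-1}$. Then $$\sum_{n\ge1}R_n(t)\frac{z^n}{n!}=z\,\overline{Q}(t,z),$$ where $\overline{Q}(t,z)=\sum_{n\ge0}\overline{Q}_n(t)\frac{z^n}{n!}$ and $\overline{Q}_n(t)=\sum_{\pi}t^{\operatorname{des}(\pi)}$ over all quasi-Stirling permutations $\pi$ of size $n$.
   Context: $\mathcal{T}_n$ is the set of plane (ordered) rooted trees with $n$ edges labeled bijectively by $\{1,\dots,n\}$, and $\mathcal{T}'_n\subseteq\mathcal{T}_n$ is the subset of trees whose root has exactly one child. For a sequence $\pi_1\cdots\pi_r$: $i\in\{1,\dots,r\}$ is a descent if $\pi_i>\pi_{i+1}$ or $i=r$, and $\operatorname{des}$ counts descents; $\operatorname{cdes}(\pi_1\cdots\pi_r)=|\{i\in\{1,\dots,r\}:\pi_i>\pi_{i+1}\}|$ with $\pi_{r+1}=\pi_1$. For a vertex $v$ of a tree $T\in\mathcal{T}_n$ whose children edges have labels $a_1,\dots,a_d$ from left to right: if $v$ is not the root and its parent edge has label $\ell$, $\operatorname{cdes}(v)=\operatorname{cdes}(\ell a_1\cdots a_d)$; if $v$ is the root, $\operatorname{cdes}(v)=\operatorname{des}(a_1\cdots a_d)$; and $\operatorname{cdes}(T)=\sum_v\operatorname{cdes}(v)$. A quasi-Stirling permutation of size $n$ is a permutation $\pi_1\cdots\pi_{2n}$ of $\{1,1,\dots,n,n\}$ with no indices $i<j<k<\ell$ with $\pi_i=\pi_k$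 and $\pi_j=\pi_\ell$ (for $n=0$ only the empty sequence). *)

theory Defs
  imports "HOL-Computational_Algebra.Computational_Algebra"
begin

text \<open>Plane rooted trees with labelled edges: a node is the list (left to right)
of its child edges, each given as (edge label, subtree below that edge).\<close>
datatype ltree = Node "(nat \<times> ltree) list"

fun edge_labels :: "ltree \<Rightarrow> nat list" where
  "edge_labels (Node cs) = concat (map (\<lambda>(a, s). a # edge_labels s) cs)"

definition trees :: "nat \<Rightarrow> ltree set" where
  "trees n = {T. mset (edge_labels T) = mset [1..<n+1]}"

definition trees1 :: "nat \<Rightarrow> ltree set" where
  "trees1 n = {T \<in> trees n. \<exists>a s. T = Node [(a, s)]}"

definition des :: "nat list \<Rightarrow> nat" where
  "des xs = card {i. i < length xs \<and> (i = length xs - 1 \<or> xs ! i > xs ! (i+1))}"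

definition cdes_list :: "nat list \<Rightarrow> nat" where
  "cdes_list xs = card {i. i < length xs \<and> xs ! i > xs ! ((i+1) mod length xs)}"

text \<open>cdes summed over a non-root vertex with parent edge label l and all vertices below.\<close>
fun cdes_below :: "nat \<Rightarrow> ltree \<Rightarrow> nat" where
  "cdes_below l (Node cs) =
     cdes_list (l # map fst cs) + sum_list (map (\<lambda>(a, s). cdes_below a s) cs)"

fun cdes_tree :: "ltree \<Rightarrow> nat" where
  "cdes_tree (Node cs) = des (map fst cs) + sum_list (map (\<lambda>(a, s). cdes_below a s) cs)"

definition quasi_stirling :: "nat \<Rightarrow> nat list set" where
  "quasi_stirling n = {p. mset p = mset ([1..<n+1] @ [1..<n+1]) \<and>
     \<not> (\<exists>i j k l. i < j \<and> j < k \<and> k < l \<and> l < length p \<and> p ! i = p ! k \<and> p ! j = p ! l)}"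

definition R :: "nat \<Rightarrow> real poly" where
  "R n = (\<Sum>T\<in>trees1 n. monom 1 (cdes_tree T - 1))"

definition Qbar :: "nat \<Rightarrow> real poly" where
  "Qbar n = (\<Sum>p\<in>quasi_stirling n. monom 1 (des p))"

end

theory Submission
  imports Defs
begin


fun adesc :: "nat list \<Rightarrow> nat" where
  "adesc (x # y # zs) = (if y < x then 1 else 0) + adesc (y # zs)"
| "adesc _ = 0"

lemma adesc_card: "adesc xs = card {i. Suc i < length xs \<and> xs ! Suc i < xs ! i}"
proof (induction xs rule: adesc.induct)
  case (1 x y zs)
  have eq: "{i. Suc i < length (x # y # zs) \<and> (x # y # zs) ! Suc i < (x # y # zs) ! i}
     = (if y < x then insert 0 else id) (Suc ` {i. Suc i < length (y # zs) \<and> (y # zs) ! Suc i < (y # zs) ! i})"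
    apply (auto simp: image_iff split: if_splits)
    apply (case_tac xa; auto)+
    done
  have fin: "finite {i. Suc i < length (y # zs) \<and> (y # zs) ! Suc i < (y # zs) ! i}"
    by (rule finite_subset[of _ "{..<length (y # zs)}"]) auto
  show ?case unfolding eq using 1 fin by (auto simp: card_image)
next
  case ("2_1") then show ?case by simp
next
  case ("2_2" v) then show ?case by simp
qed

lemma adesc_append: "adesc (xs @ ys) = adesc xs + adesc ys + (if xs \<noteq> [] \<and> ys \<noteq> [] \<and> hd ys < last xs then 1 else 0)"
proof (induction xs rule: adesc.induct)
  case (1 x y zs) then show ?case by simp
next
  case "2_1" then show ?case by simp
next
  case ("2_2" v) then show ?case by (cases ys) auto
qed

lemma des_adesc: "des xs = adesc xs + (if xs = [] then 0 else 1)"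
proof (cases "xs = []")
  case True then show ?thesis by (simp add: des_def)
next
  case False
  have "{i. i < length xs \<and> (i = length xs - 1 \<or> xs ! i > xs ! (i+1))}
     = insert (length xs - 1) {i. Suc i < length xs \<and> xs ! Suc i < xs ! i}"
    using False by auto
  moreover have "finite {i. Suc i < length xs \<and> xs ! Suc i < xs ! i}"
    by (rule finite_subset[of _ "{..<length xs}"]) auto
  ultimately show ?thesis using False by (simp add: des_def adesc_card)
qed

lemma cdes_adesc: "cdes_list (x # ys) = adesc (x # ys @ [x])"
proof -
  let ?L = "x # ys" let ?Z = "x # ys @ [x]"
  have "{i. i < length ?L \<and> ?L ! i > ?L ! ((i+1) mod length ?L)}
      = {i. Suc i < length ?Z \<and> ?Z ! Suc i < ?Z ! i}"
  proof (rule Collect_cong)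
    fix i
    consider "i < length ys" | "i = length ys" | "i > length ys" by linarith
    then show "(i < length ?L \<and> ?L ! i > ?L ! ((i+1) mod length ?L)) = (Suc i < length ?Z \<and> ?Z ! Suc i < ?Z ! i)"
    proof cases
      case 1
      then show ?thesis by (auto simp: nth_Cons' nth_append)
    next
      case 2
      have "(x # ys @ [x]) ! length ys = (x#ys) ! length ys"
        by (metis append_Cons length_Cons lessI nth_append)
      then show ?thesis using 2 by simp
    next
      case 3 then show ?thesis by simp
    qed
  qed
  then show ?thesis by (simp add: cdes_list_def adesc_card)
qed

lemma adesc_Cons: "adesc (x # ys) = adesc ys + (if ys \<noteq> [] \<and> hd ys < x then 1 else 0)"
  using adesc_append[of "[x]" ys] by simp

lemma cdes_rotate1: "cdes_list (rotate1 xs) = cdes_list xs"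
proof (cases xs)
  case Nil then show ?thesis by simp
next
  case (Cons x ys)
  show ?thesis
  proof (cases ys)
    case Nil then show ?thesis using Cons by simp
  next
    case (Cons y zs)
    have "cdes_list (rotate1 xs) = adesc (y # zs @ [x] @ [y])"
      using Cons \<open>xs = x # ys\<close> cdes_adesc[of y "zs @ [x]"] by simp
    also have "\<dots> = adesc (y # zs @ [x]) + (if y < x then 1 else 0)"
      using adesc_append[of "y # zs @ [x]" "[y]"] by simp
    also have "\<dots> = adesc (x # y # zs @ [x])" by simp
    also have "\<dots> = cdes_list xs" using Cons \<open>xs = x # ys\<close> cdes_adesc[of x ys] by simp
    finally show ?thesis .
  qed
qed

lemma cdes_rotate: "cdes_list (rotate m xs) = cdes_list xs"
  by (induction m) (simp_all add: cdes_rotate1)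

lemma cdes_max: "\<forall>y\<in>set ys. y < n \<Longrightarrow> cdes_list (n # ys) = des ys"
proof -
  assume a: "\<forall>y\<in>set ys. y < n"
  show ?thesis
  proof (cases ys rule: rev_cases)
    case Nil then show ?thesis using cdes_adesc[of n "[]"] by (simp add: des_def)
  next
    case (snoc zs z)
    have "cdes_list (n # ys) = adesc (n # ys @ [n])" by (rule cdes_adesc)
    also have "\<dots> = adesc (n # ys) + adesc [n] + (if z > n then 1 else 0)"
      using adesc_append[of "n # ys" "[n]"] snoc by simp
    also have "\<dots> = adesc ys + 1" using a snoc by (cases zs) (auto simp: adesc_Cons)
    finally show ?thesis using snoc by (simp add: des_adesc)
  qed
qed

lemma cdes_map_Suc: "cdes_list (map Suc xs) = cdes_list xs"
proof (cases "xs = []")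
  case True then show ?thesis by simp
next
  case False
  then have "\<And>i. i < length xs \<Longrightarrow> Suc i mod length xs < length xs" by simp
  then show ?thesis unfolding cdes_list_def length_map
    by (intro arg_cong[where f=card]) auto
qed

lemma adesc_map_Suc: "adesc (map Suc xs) = adesc xs"
  by (induction xs rule: adesc.induct) auto

lemma cdes_one: "\<forall>y\<in>set ys. 1 < y \<Longrightarrow> cdes_list (1 # ys) = des ys"
proof -
  assume a: "\<forall>y\<in>set ys. 1 < y"
  show ?thesis
  proof (cases ys rule: rev_cases)
    case Nil then show ?thesis using cdes_adesc[of 1 "[]"] by (simp add: des_def)
  next
    case (snoc zs z)
    have "cdes_list (1 # ys) = adesc (1 # ys @ [1])" by (rule cdes_adesc)
    also have "\<dots> = adesc (1 # ys) + adesc [1] + (if z > 1 then 1 else 0)"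
      using adesc_append[of "1 # ys" "[1]"] snoc by simp
    also have "\<dots> = adesc ys + 1" using a snoc by (cases zs) (auto simp: adesc_Cons)
    finally show ?thesis using snoc by (simp add: des_adesc)
  qed
qed

definition rot :: "nat \<Rightarrow> nat \<Rightarrow> nat" where
  "rot n x = (if x = n then 1 else Suc x)"

lemma cdes_rot:
  assumes "distinct xs" "set xs \<subseteq> {1..n}"
  shows "cdes_list (map (rot n) xs) = cdes_list xs"
proof (cases "n \<in> set xs")
  case False
  then have "map (rot n) xs = map Suc xs" by (auto simp: rot_def)
  then show ?thesis using cdes_map_Suc by metis
next
  case True
  then obtain us vs where xs: "xs = us @ n # vs" by (meson split_list)
  have r: "rotate (length us) xs = n # vs @ us" using xs rotate_append[of us "n # vs"] by simp
  let ?ys = "vs @ us"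
  have ys: "\<forall>y\<in>set ?ys. y < n \<and> 1 \<le> y" using assms xs by fastforce
  have "cdes_list (map (rot n) xs) = cdes_list (rotate (length us) (map (rot n) xs))"
    by (simp add: cdes_rotate)
  also have "\<dots> = cdes_list (1 # map (rot n) ?ys)" by (simp add: rotate_map r rot_def)
  also have "map (rot n) ?ys = map Suc ?ys" using ys by (auto simp: rot_def)
  also have "cdes_list (1 # map Suc ?ys) = des (map Suc ?ys)"
    by (rule cdes_one) (use ys in auto)
  also have "\<dots> = des ?ys" using adesc_map_Suc[of ?ys] by (simp add: des_adesc)
  also have "\<dots> = cdes_list (n # ?ys)" using ys by (simp add: cdes_max)
  also have "\<dots> = cdes_list xs" by (metis r cdes_rotate)
  finally show ?thesis .
qed



fun word :: "ltree \<Rightarrow> nat list" where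
  "word (Node cs) = concat (map (\<lambda>(a, s). a # word s @ [a]) cs)"

lemma word_Nil[simp]: "word (Node []) = []" by simp
lemma word_Cons[simp]: "word (Node ((a, s) # cs)) = a # word s @ a # word (Node cs)" by simp
lemma labels_Nil[simp]: "edge_labels (Node []) = []" by simp
lemma labels_Cons[simp]: "edge_labels (Node ((a, s) # cs)) = a # edge_labels s @ edge_labels (Node cs)" by simp
declare word.simps[simp del] edge_labels.simps[simp del]

lemma forest_induct:
  assumes "P (Node [])" "\<And>a s cs. P s \<Longrightarrow> P (Node cs) \<Longrightarrow> P (Node ((a, s) # cs))"
  shows "P T"
proof (induction T)
  case (Node cs)
  then show ?case
  proof (induction cs)
    case Nil then show ?case using assms(1) by simp
  next
    case (Cons c cs)
    obtain a s where c: "c = (a, s)" by force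
    have "s \<in> Basic_BNFs.snds c" using c by simp
    then have "P s" using Cons.prems by (meson list.set_intros(1))
    moreover have "P (Node cs)" using Cons by auto
    ultimately show ?case using assms(2) c by simp
  qed
qed

lemma mset_word: "mset (word T) = mset (edge_labels T) + mset (edge_labels T)"
  by (induction T rule: forest_induct) auto

lemma set_word: "set (word T) = set (edge_labels T)"
  by (induction T rule: forest_induct) auto

lemma word_empty_iff: "word (Node cs) = [] \<longleftrightarrow> cs = []"
  by (cases cs) auto

lemma hd_word: "cs \<noteq> [] \<Longrightarrow> hd (word (Node cs)) = fst (hd cs)"
  by (cases cs) auto

lemma last_word: "cs \<noteq> [] \<Longrightarrow> last (word (Node cs)) = fst (last cs)"
proof (induction cs)
  case Nil then show ?case by simp
next
  case (Cons c cs)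
  obtain a s where c: "c = (a, s)" by force
  show ?case using Cons c by (cases "cs = []") (auto simp: word_empty_iff)
qed

lemma adesc_word:
  "(\<forall>b. adesc (b # word T @ [b]) = cdes_below b T) \<and>
   adesc (word T) = adesc (map fst (case T of Node cs \<Rightarrow> cs)) +
      sum_list (map (\<lambda>(a, s). cdes_below a s) (case T of Node cs \<Rightarrow> cs))"
proof (induction T rule: forest_induct)
  case 1
  then show ?case using cdes_adesc[of _ "[]"] by simp
next
  case (2 a s cs)
  let ?W = "word (Node cs)"
  have sec: "adesc (word (Node ((a, s) # cs))) = adesc (map fst ((a, s) # cs)) +
      sum_list (map (\<lambda>(a, s). cdes_below a s) ((a, s) # cs))"
  proof -
    have "adesc (word (Node ((a, s) # cs))) = adesc ((a # word s @ [a]) @ ?W)" by simp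
    also have "\<dots> = cdes_below a s + adesc ?W + (if cs \<noteq> [] \<and> fst (hd cs) < a then 1 else 0)"
      using 2 by (subst adesc_append) (auto simp: word_empty_iff hd_word)
    also have "\<dots> = adesc (map fst ((a, s) # cs)) + sum_list (map (\<lambda>(a, s). cdes_below a s) ((a, s) # cs))"
      using 2 by (cases cs) (auto simp: adesc_Cons)
    finally show ?thesis .
  qed
  have fst: "adesc (b # word (Node ((a, s) # cs)) @ [b]) = cdes_below b (Node ((a, s) # cs))" for b
  proof -
    let ?cs = "(a, s) # cs"
    let ?W' = "word (Node ?cs)"
    have ne: "?W' \<noteq> []" by simp
    have "adesc (b # ?W' @ [b]) = adesc (b # ?W') + (if b < last ?W' then 1 else 0)"
      using adesc_append[of "b # ?W'" "[b]"] ne by simp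
    also have "\<dots> = adesc ?W' + (if hd ?W' < b then 1 else 0) + (if b < fst (last ?cs) then 1 else 0)"
      using ne by (simp add: adesc_Cons last_word del: word_Cons)
    also have "\<dots> = adesc (map fst ?cs) + (if a < b then 1 else 0) + (if b < fst (last ?cs) then 1 else 0)
        + sum_list (map (\<lambda>(a, s). cdes_below a s) ?cs)"
      using sec by simp
    also have "adesc (map fst ?cs) + (if a < b then 1 else 0) + (if b < fst (last ?cs) then 1 else 0)
        = cdes_list (b # map fst ?cs)"
    proof -
      have "cdes_list (b # map fst ?cs) = adesc (b # map fst ?cs @ [b])" by (rule cdes_adesc)
      also have "\<dots> = adesc (b # map fst ?cs) + (if b < last (map fst ?cs) then 1 else 0)"
        using adesc_append[of "b # map fst ?cs" "[b]"] by simp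
      also have "last (map fst ?cs) = fst (last ?cs)" by (simp add: last_map)
      finally show ?thesis by (simp add: adesc_Cons)
    qed
    finally show ?thesis by simp
  qed
  show ?case using sec fst by simp
qed

lemma des_word: "des (word T) = cdes_tree T"
proof (cases T)
  case (Node cs)
  have "des (word T) = adesc (word T) + (if cs = [] then 0 else 1)"
    using Node by (simp add: des_adesc word_empty_iff)
  also have "\<dots> = des (map fst cs) + sum_list (map (\<lambda>(a, s). cdes_below a s) cs)"
    using adesc_word[of T] Node by (simp add: des_adesc)
  finally show ?thesis using Node by simp
qed



definition pf :: "nat list \<Rightarrow> bool" where
  "pf p = (\<not> (\<exists>i j k l. i < j \<and> j < k \<and> k < l \<and> l < length p \<and> p ! i = p ! k \<and> p ! j = p ! l))"

lemma pf_Nil: "pf []" by (simp add: pf_def)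

lemma nth_split:
  fixes a :: nat and u v :: "nat list"
  defines "p \<equiv> a # u @ a # v"
  shows "p ! 0 = a" "p ! Suc (length u) = a"
    "\<And>i. 1 \<le> i \<Longrightarrow> i \<le> length u \<Longrightarrow> p ! i = u ! (i - 1) \<and> p ! i \<in> set u"
    "\<And>i. Suc (length u) < i \<Longrightarrow> i < length p \<Longrightarrow> p ! i = v ! (i - length u - 2) \<and> p ! i \<in> set v"
proof -
  show "p ! 0 = a" by (simp add: p_def)
  show "p ! Suc (length u) = a" by (simp add: p_def nth_append)
  fix i
  show "1 \<le> i \<Longrightarrow> i \<le> length u \<Longrightarrow> p ! i = u ! (i - 1) \<and> p ! i \<in> set u"
    by (cases i) (auto simp: p_def nth_append)
  show "Suc (length u) < i \<Longrightarrow> i < length p \<Longrightarrow> p ! i = v ! (i - length u - 2) \<and> p ! i \<in> set v"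
    by (cases i) (auto simp: p_def nth_append numeral_2_eq_2 Suc_diff_Suc)
qed

lemma pf_cons:
  assumes pu: "pf u" and pv: "pf v" and au: "a \<notin> set u" and av: "a \<notin> set v"
    and uv: "set u \<inter> set v = {}"
  shows "pf (a # u @ a # v)"
  unfolding pf_def
proof (clarify)
  let ?p = "a # u @ a # v" let ?m = "length u"
  fix i j k l
  assume ij: "i < j" and jk: "j < k" and kl: "k < l" and ll: "l < length ?p"
    and ik: "?p ! i = ?p ! k" and jl: "?p ! j = ?p ! l"
  note ns = nth_split[where a=a and u=u and v=v]
  have zone: "\<And>x. x < length ?p \<Longrightarrow> (x = 0 \<or> x = Suc ?m) \<and> ?p ! x = a \<or> (1 \<le> x \<and> x \<le> ?m) \<and> ?p ! x \<in> set u
     \<or> Suc ?m < x \<and> ?p ! x \<in> set v"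
  proof -
    fix x assume "x < length ?p"
    then consider "x = 0" | "1 \<le> x \<and> x \<le> ?m" | "x = Suc ?m" | "Suc ?m < x" by linarith
    then show "?thesis x" using ns \<open>x < length ?p\<close> by cases auto
  qed
  have kz: "k < length ?p" "j < length ?p" "i < length ?p" using ij jk kl ll by auto
  show False
  proof -
    from zone[OF kz(3)] consider (A) "(i = 0 \<or> i = Suc ?m) \<and> ?p ! i = a"
      | (U) "(1 \<le> i \<and> i \<le> ?m) \<and> ?p ! i \<in> set u" | (V) "Suc ?m < i \<and> ?p ! i \<in> set v" by blast
    then show False
    proof cases
      case A
      then have "?p ! k = a" using ik by simp
      then have "k = 0 \<or> k = Suc ?m" using zone[OF kz(1)] au av by auto
      then have i0: "i = 0" and km: "k = Suc ?m" using A ij jk by auto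
      have "1 \<le> j \<and> j \<le> ?m" using i0 km ij jk by auto
      then have "?p ! j \<in> set u" using ns by blast
      moreover have "?p ! l \<in> set v" using ns(4)[of l] km kl ll by auto
      ultimately show False using jl uv by auto
    next
      case U
      then have "?p ! k \<in> set u" using ik by simp
      then have kU: "1 \<le> k \<and> k \<le> ?m" using zone[OF kz(1)] au uv by auto
      then have jU: "1 \<le> j \<and> j \<le> ?m" using ij jk U by auto
      then have "?p ! l \<in> set u" using jl ns by metis
      then have lU: "1 \<le> l \<and> l \<le> ?m" using zone[of l] ll au uv by auto
      have ui: "?p ! i = u ! (i - 1)" using ns(3) U by blast
      have uj: "?p ! j = u ! (j - 1)" using ns(3) jU by blast
      have uk: "?p ! k = u ! (k - 1)" using ns(3) kU by blast
      have ul: "?p ! l = u ! (l - 1)" using ns(3) lU by blast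
      have "i - 1 < j - 1" "j - 1 < k - 1" "k - 1 < l - 1" "l - 1 < length u"
        using U ij jk kl lU by auto
      then show False using pu ui uj uk ul ik jl unfolding pf_def by metis
    next
      case V
      have vi: "?p ! i = v ! (i - ?m - 2)" using ns(4) V kz by blast
      have vj: "?p ! j = v ! (j - ?m - 2)" using ns(4) V kz ij by (meson less_trans)
      have vk: "?p ! k = v ! (k - ?m - 2)" using ns(4) V kz ij jk by (meson less_trans)
      have vl: "?p ! l = v ! (l - ?m - 2)" using ns(4) V ll ij jk kl by (meson less_trans)
      have "i - ?m - 2 < j - ?m - 2" "j - ?m - 2 < k - ?m - 2" "k - ?m - 2 < l - ?m - 2"
        "l - ?m - 2 < length v" using V ij jk kl ll by auto
      then show False using pv vi vj vk vl ik jl unfolding pf_def by metis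
    qed
  qed
qed



lemma pf_left: assumes "pf (a # u @ a # v)" shows "pf u"
  unfolding pf_def
proof clarify
  fix i j k l assume h: "i < j" "j < k" "k < l" "l < length u" "u ! i = u ! k" "u ! j = u ! l"
  let ?p = "a # u @ a # v"
  have e: "\<And>x. x < length u \<Longrightarrow> ?p ! Suc x = u ! x" by (simp add: nth_append)
  have "Suc i < Suc j" "Suc j < Suc k" "Suc k < Suc l" "Suc l < length ?p" using h by auto
  moreover have "?p ! Suc i = ?p ! Suc k" "?p ! Suc j = ?p ! Suc l" using h e by auto
  ultimately show False using assms unfolding pf_def by blast
qed

lemma pf_right: assumes "pf (a # u @ a # v)" shows "pf v"
  unfolding pf_def
proof clarify
  fix i j k l assume h: "i < j" "j < k" "k < l" "l < length v" "v ! i = v ! k" "v ! j = v ! l"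
  let ?p = "a # u @ a # v" let ?s = "Suc (Suc (length u))"
  have e: "\<And>x. ?p ! (?s + x) = v ! x" by (simp add: nth_append)
  have "?s + i < ?s + j" "?s + j < ?s + k" "?s + k < ?s + l" "?s + l < length ?p" using h by auto
  moreover have "?p ! (?s + i) = ?p ! (?s + k)" "?p ! (?s + j) = ?p ! (?s + l)" using h e by metis+
  ultimately show False using assms unfolding pf_def by blast
qed

lemma pf_straddle: assumes "pf (a # u @ a # v)" "x \<in> set u" "x \<in> set v" shows False
proof -
  obtain iu where iu: "iu < length u" "u ! iu = x" using assms(2) by (meson in_set_conv_nth)
  obtain iv where iv: "iv < length v" "v ! iv = x" using assms(3) by (meson in_set_conv_nth)
  let ?p = "a # u @ a # v" let ?s = "Suc (Suc (length u))"
  have "0 < Suc iu" "Suc iu < Suc (length u)" "Suc (length u) < ?s + iv" "?s + iv < length ?p"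
    using iu iv by auto
  moreover have "?p ! 0 = ?p ! Suc (length u)" by (simp add: nth_append)
  moreover have "?p ! Suc iu = ?p ! (?s + iv)" using iu iv by (simp add: nth_append)
  ultimately show False using assms(1) unfolding pf_def by blast
qed

lemma pf_word: "distinct (edge_labels T) \<Longrightarrow> pf (word T)"
proof (induction T rule: forest_induct)
  case 1 then show ?case by (simp add: pf_Nil)
next
  case (2 a s cs)
  show ?case unfolding word_Cons by (rule pf_cons) (use 2 in \<open>auto simp: set_word\<close>)
qed

lemma first_split: "x \<notin> set xs \<Longrightarrow> x \<notin> set xs' \<Longrightarrow> xs @ x # ys = xs' @ x # ys' \<Longrightarrow> xs = xs' \<and> ys = ys'"
proof (induction xs arbitrary: xs')
  case Nil then show ?case by (cases xs') auto
next
  case (Cons y xs) then show ?case by (cases xs') auto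
qed

lemma word_inj: "\<forall>T2. distinct (edge_labels T1) \<longrightarrow> distinct (edge_labels T2) \<longrightarrow> word T1 = word T2 \<longrightarrow> T1 = T2"
proof (induction T1 rule: forest_induct)
  case 1
  show ?case
  proof clarify
    fix T2 assume "word (Node []) = word T2"
    then show "Node [] = T2" by (cases T2) (metis word_empty_iff)
  qed
next
  case (2 a s cs)
  show ?case
  proof clarify
    fix T2 assume d1: "distinct (edge_labels (Node ((a, s) # cs)))" and d2: "distinct (edge_labels T2)"
      and w: "word (Node ((a, s) # cs)) = word T2"
    obtain cs2 where T2: "T2 = Node cs2" by (cases T2)
    have "cs2 \<noteq> []" using w T2 word_empty_iff[of cs2] by auto
    then obtain b t cs2' where cs2: "cs2 = (b, t) # cs2'" by (metis list.exhaust surj_pair)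
    have w2: "a # word s @ a # word (Node cs) = b # word t @ b # word (Node cs2')" using w T2 cs2 by (simp only: word_Cons)
    then have ab: "a = b" by simp
    have "a \<notin> set (word s)" "b \<notin> set (word t)" using d1 d2 T2 cs2 by (auto simp: set_word)
    then have "word s = word t \<and> word (Node cs) = word (Node cs2')"
      using w2 ab first_split by metis
    moreover have "distinct (edge_labels s)" "distinct (edge_labels (Node cs))" using d1 by auto
    moreover have "distinct (edge_labels t)" "distinct (edge_labels (Node cs2'))" using d2 T2 cs2 by auto
    ultimately have "s = t" "Node cs = Node cs2'" using 2 by blast+
    then show "Node ((a, s) # cs) = T2" using T2 cs2 ab by simp
  qed
qed

lemma word_surj: "(\<forall>x. count (mset p) x = 0 \<or> count (mset p) x = 2) \<Longrightarrow> pf p \<Longrightarrow> \<exists>T. word T = p"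
proof (induction p rule: length_induct)
  case (1 p)
  show ?case
  proof (cases p)
    case Nil then show ?thesis by (metis word_Nil)
  next
    case (Cons a rest)
    have "count (mset p) a \<noteq> 0" using Cons by simp
    then have "count (mset p) a = 2" using spec[OF 1(2), of a] by auto
    then have "count (mset rest) a = 1" using Cons by simp
    then have "a \<in> set rest" by (metis count_mset_0_iff one_neq_zero)
    then obtain u v where rest: "rest = u @ a # v" and au: "a \<notin> set u" by (meson split_list_first)
    have p: "p = a # u @ a # v" using Cons rest by simp
    have ca: "count (mset p) a = 2 + count (mset v) a" using p au by (simp add: count_mset_0_iff)
    then have av: "a \<notin> set v" using \<open>count (mset p) a = 2\<close> by (simp add: count_mset_0_iff)
    have pu: "pf u" and pv: "pf v" using 1(3) p pf_left pf_right by blast+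
    have cx: "count (mset p) x = count (mset u) x + count (mset v) x" if "x \<noteq> a" for x
      using p that by simp
    have cu: "\<forall>x. count (mset u) x = 0 \<or> count (mset u) x = 2"
    proof
      fix x show "count (mset u) x = 0 \<or> count (mset u) x = 2"
      proof (cases "x = a")
        case True then show ?thesis using au by (simp add: count_mset_0_iff)
      next
        case False
        show ?thesis
        proof (cases "x \<in> set v")
          case True
          then have "x \<notin> set u" using pf_straddle 1(3) p by blast
          then show ?thesis by (simp add: count_mset_0_iff)
        next
          case nv: False
          have "count (mset u) x = count (mset p) x" using cx[OF False] nv by (simp add: count_mset_0_iff)
          then show ?thesis using spec[OF 1(2), of x] by simp
        qed
      qed
    qed
    have cv: "\<forall>x. count (mset v) x = 0 \<or> count (mset v) x = 2"
    proof
      fix x show "count (mset v) x = 0 \<or> count (mset v) x = 2"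
      proof (cases "x = a")
        case True then show ?thesis using av by (simp add: count_mset_0_iff)
      next
        case False
        show ?thesis
        proof (cases "x \<in> set u")
          case True
          then have "x \<notin> set v" using pf_straddle 1(3) p by blast
          then show ?thesis by (simp add: count_mset_0_iff)
        next
          case nu: False
          have "count (mset v) x = count (mset p) x" using cx[OF False] nu by (simp add: count_mset_0_iff)
          then show ?thesis using spec[OF 1(2), of x] by simp
        qed
      qed
    qed
    have lu: "length u < length p" and lv: "length v < length p" using p by auto
    obtain Tu where Tu: "word Tu = u" using 1(1) lu cu pu by blast
    obtain Tv where Tv: "word Tv = v" using 1(1) lv cv pv by blast
    obtain ds where ds: "Tv = Node ds" by (cases Tv)
    have "word (Node ((a, Tu) # ds)) = p" using Tu Tv ds p by simp
    then show ?thesis by blast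
  qed
qed



lemma trees_distinct: "T \<in> trees m \<Longrightarrow> distinct (edge_labels T)"
proof -
  assume "T \<in> trees m"
  then have "mset (edge_labels T) = mset [1..<m+1]" by (simp add: trees_def)
  then show ?thesis using mset_eq_imp_distinct_iff[of "edge_labels T" "[1..<m+1]"] by simp
qed

lemma bij_word: "bij_betw word (trees m) (quasi_stirling m)"
  unfolding bij_betw_def
proof (intro conjI)
  show "inj_on word (trees m)"
    using word_inj trees_distinct unfolding inj_on_def by blast
  show "word ` trees m = quasi_stirling m"
  proof (intro set_eqI iffI)
    fix p assume "p \<in> word ` trees m"
    then obtain T where T: "T \<in> trees m" "p = word T" by blast
    have "mset p = mset ([1..<m+1] @ [1..<m+1])" using T mset_word[of T] by (simp add: trees_def)
    moreover have "pf p" using T pf_word trees_distinct by blast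
    ultimately show "p \<in> quasi_stirling m" unfolding quasi_stirling_def pf_def by blast
  next
    fix p assume p: "p \<in> quasi_stirling m"
    let ?L = "[1..<m+1]"
    have mp: "mset p = mset ?L + mset ?L" using p by (simp add: quasi_stirling_def)
    have dl: "distinct ?L" by simp
    have cnt: "\<forall>x. count (mset p) x = 0 \<or> count (mset p) x = 2"
      using mp dl unfolding distinct_count_atmost_1 by (metis count_union one_add_one add_0)
    have "pf p" using p unfolding quasi_stirling_def pf_def by blast
    then obtain T where T: "word T = p" using word_surj cnt by blast
    have "mset (edge_labels T) + mset (edge_labels T) = mset ?L + mset ?L" using T mp mset_word by metis
    then have "mset (edge_labels T) = mset ?L" unfolding multiset_eq_iff by (metis count_union add_diff_cancel_left' mult_2 diff_add_cancel nat_mult_eq_cancel_disj zero_neq_numeral)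
    then have "T \<in> trees m" by (simp add: trees_def)
    then show "p \<in> word ` trees m" using T by blast
  qed
qed

lemma finite_qs: "finite (quasi_stirling m)"
proof (rule finite_subset)
  show "quasi_stirling m \<subseteq> {xs. set xs \<subseteq> {1..m} \<and> length xs = 2 * m}"
  proof
    fix p assume "p \<in> quasi_stirling m"
    then have mp: "mset p = mset ([1..<m+1] @ [1..<m+1])" by (simp add: quasi_stirling_def)
    have "set p = set ([1..<m+1] @ [1..<m+1])" using mset_eq_setD[OF mp] .
    moreover have "length p = length ([1..<m+1] @ [1..<m+1])" using mset_eq_length[OF mp] .
    ultimately show "p \<in> {xs. set xs \<subseteq> {1..m} \<and> length xs = 2 * m}" by auto
  qed
  show "finite {xs. set xs \<subseteq> {1..m} \<and> length xs = 2 * m}"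
    by (rule finite_lists_length_eq) simp
qed

lemma finite_trees: "finite (trees m)"
  using bij_betw_finite[OF bij_word] finite_qs by blast

lemma C_eq: "(\<Sum>T\<in>trees m. (monom 1 (cdes_tree T) :: real poly)) = Qbar m"
proof -
  have "Qbar m = (\<Sum>T\<in>trees m. monom 1 (des (word T)))"
    unfolding Qbar_def by (rule sum.reindex_bij_betw[OF bij_word, symmetric])
  then show ?thesis by (simp add: des_word)
qed



fun relabel :: "(nat \<Rightarrow> nat) \<Rightarrow> ltree \<Rightarrow> ltree" where
  "relabel f (Node cs) = Node (map (\<lambda>(a, s). (f a, relabel f s)) cs)"

lemma relabel_Nil[simp]: "relabel f (Node []) = Node []" by simp
lemma relabel_Cons[simp]: "relabel f (Node ((a, s) # cs)) = Node ((f a, relabel f s) # (case relabel f (Node cs) of Node ds \<Rightarrow> ds))"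
  by simp

lemma labels_relabel: "edge_labels (relabel f T) = map f (edge_labels T)"
  by (induction T rule: forest_induct) (auto split: ltree.splits simp del: relabel.simps)

lemma relabel_inv: "(\<forall>x\<in>set (edge_labels T). g (f x) = x) \<Longrightarrow> relabel g (relabel f T) = T"
  by (induction T rule: forest_induct) (auto split: ltree.splits simp del: relabel.simps)

lemma fst_sub: "distinct (edge_labels (Node cs)) \<Longrightarrow> distinct (map fst cs) \<and> set (map fst cs) \<subseteq> set (edge_labels (Node cs))"
proof (induction cs)
  case Nil then show ?case by simp
next
  case (Cons c cs)
  obtain a s where c: "c = (a, s)" by force
  show ?case using Cons c by auto
qed

lemma child_sub: "(a, s) \<in> set cs \<Longrightarrow> distinct (edge_labels (Node cs)) \<Longrightarrow>
   distinct (a # edge_labels s) \<and> set (a # edge_labels s) \<subseteq> set (edge_labels (Node cs))"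
proof (induction cs)
  case Nil then show ?case by simp
next
  case (Cons c cs)
  obtain b t where c: "c = (b, t)" by force
  show ?case using Cons c by auto
qed

lemma cdes_below_Node: "cdes_below l (Node cs) = cdes_list (l # map fst cs) + sum_list (map (\<lambda>(a, s). cdes_below a s) cs)"
  by simp

lemma cdes_below_rot:
  "distinct (l # edge_labels T) \<Longrightarrow> set (l # edge_labels T) \<subseteq> {1..n} \<Longrightarrow>
   cdes_below (rot n l) (relabel (rot n) T) = cdes_below l T"
proof (induction l T rule: cdes_below.induct)
  case (1 l cs)
  have d: "distinct (edge_labels (Node cs))" using 1(2) by simp
  have lhs: "relabel (rot n) (Node cs) = Node (map (\<lambda>(a, s). (rot n a, relabel (rot n) s)) cs)" by simp
  have m1: "map fst (map (\<lambda>(a, s). (rot n a, relabel (rot n) s)) cs) = map (rot n) (map fst cs)"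
    by (induction cs) auto
  have c1: "cdes_list (rot n l # map (rot n) (map fst cs)) = cdes_list (l # map fst cs)"
    using cdes_rot[of "l # map fst cs" n] fst_sub[OF d] 1(2,3) by auto
  have c2: "sum_list (map (\<lambda>(a, s). cdes_below a s) (map (\<lambda>(a, s). (rot n a, relabel (rot n) s)) cs))
     = sum_list (map (\<lambda>(a, s). cdes_below a s) cs)"
  proof -
    have "\<And>a s. (a, s) \<in> set cs \<Longrightarrow> cdes_below (rot n a) (relabel (rot n) s) = cdes_below a s"
    proof -
      fix a s assume as: "(a, s) \<in> set cs"
      have "distinct (a # edge_labels s) \<and> set (a # edge_labels s) \<subseteq> set (edge_labels (Node cs))"
        by (rule child_sub[OF as d])
      then have "distinct (a # edge_labels s)" "set (a # edge_labels s) \<subseteq> {1..n}" using 1(3) by auto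
      then show "cdes_below (rot n a) (relabel (rot n) s) = cdes_below a s"
        using 1(1)[OF as refl] by blast
    qed
    then show ?thesis by (induction cs) auto
  qed
  show ?case unfolding lhs cdes_below_Node m1 c1 c2 ..
qed

definition rotinv :: "nat \<Rightarrow> nat \<Rightarrow> nat" where
  "rotinv n x = (if x = 1 then n else x - 1)"

lemma rot_props: "1 \<le> n \<Longrightarrow> x \<in> {1..n} \<Longrightarrow> rot n x \<in> {1..n} \<and> rotinv n x \<in> {1..n} \<and>
   rotinv n (rot n x) = x \<and> rot n (rotinv n x) = x"
  by (auto simp: rot_def rotinv_def)

lemma perm_mset:
  assumes A: "\<And>x. x \<in> {1..n} \<Longrightarrow> f x \<in> {1..n} \<and> g x \<in> {1..n} \<and> g (f x) = x \<and> f (g x) = x"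
  shows "mset (map f [1..<n+1]) = mset [1..<n+1]"
proof -
  have inj: "inj_on f {1..n}"
  proof (rule inj_onI)
    fix x y assume x: "x \<in> {1..n}" and y: "y \<in> {1..n}" and e: "f x = f y"
    have "x = g (f x)" using A[OF x] by simp
    also have "\<dots> = g (f y)" using e by simp
    also have "\<dots> = y" using A[OF y] by simp
    finally show "x = y" .
  qed
  have sL: "set [1..<n+1] = {1..n}" by auto
  have d: "distinct (map f [1..<n+1])" unfolding distinct_map sL using inj by simp
  have im: "f ` {1..n} = {1..n}"
  proof
    show "f ` {1..n} \<subseteq> {1..n}" using A by blast
    show "{1..n} \<subseteq> f ` {1..n}"
    proof
      fix x assume x: "x \<in> {1..n}"
      then have "x = f (g x)" "g x \<in> {1..n}" using A[OF x] by auto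
      then show "x \<in> f ` {1..n}" by blast
    qed
  qed
  have "set (map f [1..<n+1]) = set [1..<n+1]" unfolding set_map sL im ..
  then show ?thesis using set_eq_iff_mset_eq_distinct[OF d distinct_upt] by blast
qed

definition U :: "nat \<Rightarrow> nat \<Rightarrow> ltree set" where
  "U n a = {S. mset (a # edge_labels S) = mset [1..<n+1]}"

definition X :: "nat \<Rightarrow> nat \<Rightarrow> real poly" where
  "X n a = (\<Sum>S\<in>U n a. monom 1 (cdes_below a S))"

lemma U_props: "S \<in> U n a \<Longrightarrow> distinct (a # edge_labels S) \<and> set (a # edge_labels S) = {1..n}"
proof -
  assume "S \<in> U n a"
  then have m: "mset (a # edge_labels S) = mset [1..<n+1]" by (simp add: U_def)
  have "distinct (a # edge_labels S)" using mset_eq_imp_distinct_iff[OF m] by simp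
  moreover have "set (a # edge_labels S) = {1..n}"
  proof -
    have "set (a # edge_labels S) = set [1..<n+1]" by (rule mset_eq_setD[OF m])
    also have "\<dots> = {1..n}" by auto
    finally show ?thesis .
  qed
  ultimately show ?thesis by blast
qed

lemma U_map:
  assumes "\<And>x. x \<in> {1..n} \<Longrightarrow> f x \<in> {1..n} \<and> g x \<in> {1..n} \<and> g (f x) = x \<and> f (g x) = x"
    and "S \<in> U n a"
  shows "relabel f S \<in> U n (f a)"
proof -
  have "mset (f a # edge_labels (relabel f S)) = image_mset f (mset (a # edge_labels S))"
    by (simp add: labels_relabel)
  also have "\<dots> = image_mset f (mset [1..<n+1])" using assms(2) by (simp add: U_def)
  also have "\<dots> = mset [1..<n+1]" using perm_mset[OF assms(1)] by simp
  finally show ?thesis by (simp add: U_def)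
qed

lemma X_rot: assumes n: "1 \<le> n" and a: "a \<in> {1..n}" shows "X n (rot n a) = X n a"
proof -
  have P1: "\<And>x. x \<in> {1..n} \<Longrightarrow> rot n x \<in> {1..n} \<and> rotinv n x \<in> {1..n} \<and> rotinv n (rot n x) = x \<and> rot n (rotinv n x) = x"
    using rot_props[OF n] by blast
  have P2: "\<And>x. x \<in> {1..n} \<Longrightarrow> rotinv n x \<in> {1..n} \<and> rot n x \<in> {1..n} \<and> rot n (rotinv n x) = x \<and> rotinv n (rot n x) = x"
    using rot_props[OF n] by blast
  have ra: "rotinv n (rot n a) = a" using P1 a by blast
  show ?thesis unfolding X_def
  proof (rule sum.reindex_bij_witness[where i = "relabel (rot n)" and j = "relabel (rotinv n)"])
    fix S assume S: "S \<in> U n (rot n a)"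
    have "\<forall>x\<in>set (edge_labels S). rot n (rotinv n x) = x"
    proof
      fix x assume "x \<in> set (edge_labels S)"
      then have "x \<in> {1..n}" using U_props[OF S] by auto
      then show "rot n (rotinv n x) = x" using P1 by blast
    qed
    then show "relabel (rot n) (relabel (rotinv n) S) = S" by (rule relabel_inv)
    show "relabel (rotinv n) S \<in> U n a" using U_map[OF P2 S] ra by simp
    have "cdes_below (rot n (rotinv n (rot n a))) (relabel (rot n) (relabel (rotinv n) S)) = cdes_below (rotinv n (rot n a)) (relabel (rotinv n) S)"
    proof (rule cdes_below_rot)
      have "relabel (rotinv n) S \<in> U n (rotinv n (rot n a))" by (rule U_map[OF P2 S])
      from U_props[OF this] show "distinct (rotinv n (rot n a) # edge_labels (relabel (rotinv n) S))"
        "set (rotinv n (rot n a) # edge_labels (relabel (rotinv n) S)) \<subseteq> {1..n}" by auto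
    qed
    then show "monom 1 (cdes_below a (relabel (rotinv n) S)) = (monom 1 (cdes_below (rot n a) S) :: real poly)"
      using ra \<open>relabel (rot n) (relabel (rotinv n) S) = S\<close> by simp
  next
    fix S assume S: "S \<in> U n a"
    have "\<forall>x\<in>set (edge_labels S). rotinv n (rot n x) = x"
    proof
      fix x assume "x \<in> set (edge_labels S)"
      then have "x \<in> {1..n}" using U_props[OF S] by auto
      then show "rotinv n (rot n x) = x" using P1 by blast
    qed
    then show "relabel (rotinv n) (relabel (rot n) S) = S" by (rule relabel_inv)
    show "relabel (rot n) S \<in> U n (rot n a)" using U_map[OF P1 S] by simp
  qed
qed

lemma X_all: assumes "1 \<le> a" "a \<le> n" shows "X n a = X n n"
  using assms
proof (induction "n - a" arbitrary: a)
  case 0 then show ?case by simp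
next
  case (Suc k)
  then have an: "a < n" by simp
  then have "rot n a = Suc a" by (simp add: rot_def)
  then have "X n a = X n (Suc a)" using X_rot[of n a] Suc.prems by simp
  also have "\<dots> = X n n" using Suc an by simp
  finally show ?case .
qed

lemma X_top: assumes "1 \<le> n" shows "X n n = (\<Sum>T\<in>trees (n - 1). monom 1 (cdes_tree T))"
proof -
  have L: "[1..<n+1] = [1..<n] @ [n]" using assms by simp
  have U: "U n n = trees (n - 1)"
    unfolding U_def trees_def using assms L by (auto simp: add_mset_eq_single)
  have "\<And>S. S \<in> trees (n - 1) \<Longrightarrow> cdes_below n S = cdes_tree S"
  proof -
    fix S assume S: "S \<in> trees (n - 1)"
    obtain cs where cs: "S = Node cs" by (cases S)
    have dS: "distinct (edge_labels S)" using trees_distinct[OF S] .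
    have "set (edge_labels S) = {1..<n}" using S mset_eq_setD[of "edge_labels S" "[1..<n]"] assms
      by (simp add: trees_def)
    then have "\<forall>y\<in>set (map fst cs). y < n" using fst_sub[of cs] dS cs by auto
    then show "cdes_below n S = cdes_tree S" using cs cdes_max by simp
  qed
  then show ?thesis unfolding X_def U by simp
qed



lemma finite_U: "finite (U n a)"
proof -
  have "(\<lambda>S. Node [(a, S)]) ` U n a \<subseteq> trees n"
    by (auto simp: U_def trees_def)
  then have "finite ((\<lambda>S. Node [(a, S)]) ` U n a)" using finite_trees finite_subset by blast
  moreover have "inj_on (\<lambda>S. Node [(a, S)]) (U n a)" by (auto intro: inj_onI)
  ultimately show ?thesis using finite_imageD by blast
qed

lemma R_eq: "R n = (\<Sum>a\<in>{1..n}. X n a)"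
proof -
  let ?h = "\<lambda>(a, S). Node [(a, S)]"
  have T1: "trees1 n = ?h ` (SIGMA a:{1..n}. U n a)"
  proof (intro set_eqI iffI)
    fix T assume "T \<in> trees1 n"
    then obtain a s where T: "T = Node [(a, s)]" and m: "mset (a # edge_labels s) = mset [1..<n+1]"
      by (auto simp: trees1_def trees_def)
    have "a \<in> set [1..<n+1]" using mset_eq_setD[OF m] by auto
    then have "a \<in> {1..n}" by auto
    moreover have "s \<in> U n a" using m by (simp add: U_def)
    ultimately show "T \<in> ?h ` (SIGMA a:{1..n}. U n a)" using T by force
  next
    fix T assume "T \<in> ?h ` (SIGMA a:{1..n}. U n a)"
    then obtain a s where T: "T = Node [(a, s)]" and s: "s \<in> U n a" by auto
    then show "T \<in> trees1 n" by (simp add: trees1_def trees_def U_def)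
  qed
  have inj: "inj_on ?h (SIGMA a:{1..n}. U n a)" by (auto intro: inj_onI)
  have "R n = (\<Sum>p\<in>(SIGMA a:{1..n}. U n a). monom 1 (cdes_tree (?h p) - 1))"
    unfolding R_def T1 by (rule sum.reindex[OF inj, unfolded comp_def])
  also have "\<dots> = (\<Sum>p\<in>(SIGMA a:{1..n}. U n a). monom 1 (cdes_below (fst p) (snd p)))"
  proof (rule sum.cong[OF refl])
    fix p :: "nat \<times> ltree"
    obtain a S where p: "p = (a, S)" by force
    have "des [a] = 1" by (simp add: des_adesc)
    then show "monom 1 (cdes_tree (?h p) - 1) = (monom 1 (cdes_below (fst p) (snd p)) :: real poly)"
      using p by simp
  qed
  also have "\<dots> = (\<Sum>a\<in>{1..n}. X n a)"
    unfolding X_def using sum.Sigma[of "{1..n}" "U n" "\<lambda>a S. (monom 1 (cdes_below a S) :: real poly)"] finite_U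
    by (simp add: case_prod_beta')
  finally show ?thesis .
qed

lemma R_Q: assumes "1 \<le> n" shows "R n = of_nat n * Qbar (n - 1)"
proof -
  have "R n = (\<Sum>a\<in>{1..n}. X n n)" unfolding R_eq by (rule sum.cong) (auto intro: X_all)
  also have "\<dots> = of_nat n * X n n" by simp
  also have "X n n = Qbar (n - 1)" using X_top[OF assms] C_eq by simp
  finally show ?thesis .
qed

theorem lemma2p4:
  shows "Abs_fps (\<lambda>n. if n = 0 then 0 else smult (1 / fact n) (R n))
       = fps_X * Abs_fps (\<lambda>n. smult (1 / fact n) (Qbar n))"
proof (rule fps_ext)
  fix n
  show "Abs_fps (\<lambda>n. if n = 0 then 0 else smult (1 / fact n) (R n)) $ n
       = (fps_X * Abs_fps (\<lambda>n. smult (1 / fact n) (Qbar n))) $ n"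
  proof (cases n)
    case 0 then show ?thesis by simp
  next
    case (Suc m)
    have "R n = smult (real (Suc m)) (Qbar m)" using R_Q[of n] Suc by (simp add: of_nat_poly)
    moreover have "1 / fact n * real (Suc m) = (1 / fact m :: real)"
      using Suc by (simp add: divide_simps)
    ultimately have "smult (1 / fact n) (R n) = smult (1 / fact m) (Qbar m)"
      by (simp only: smult_smult)
    then show ?thesis using Suc by simp
  qed
qed


end
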